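(* Let $s>0$ and let $(V_s,\oplus,\otimes)$ be the Möbius gyrovector space on the open disc $V_s=\{z\in\mathbb{C}:|z|<s\}$. Let $ABC$ be a gyrotriangle with vertices $A,B,C\in V_s$, and let $D$ be a point on the gyroside $BC$. Let $l$ be a gyroline passing through none of $A,B,C$, such that $l$ meets the gyroline $AB$ at $M$, the gyroline $AC$ at $N$, and the gyroline $AD$ at $P$. Then $$\frac{(BD)_\gamma}{(CD)_\gamma}\cdot\frac{(CA)_\gamma}{(NA)_\gamma}\cdot\frac{(NP)_\gamma}{(MP)_\gamma}\cdot\frac{(MA)_\gamma}{(BA)_\gamma}=1.$$
   Context: Möbius addition on $V_s$ is $a\oplus b=\dfrac{a+b}{1+\bar a b/s^2}$, with $\ominus a=-a$ and $a\ominus b=a\oplus(-b)$; for $s=1$ this is the Poincaré disc model of hyperbolic geometry. For points $P,Q\in V_s$, the gyrolength (hyperbolic gyrodistance) $PQ$ is $|\ominus P\oplus Q|$. Gyrolines are the geodesics of the Poincaré disc model, i.e. the sets $\{A\oplus(\ominus A\oplus B)\otimes t: t\in\mathbb{R}\}$ for distinct $A,B$ (the gyroline $AB$); equivalently, diameters of the disc and circular arcs in the disc orthogonal to its boundary. The gyroside $BC$ is the geodesic segment joining $B$ and $C$. For a gyrolength $v\in(-s,s)$, the notation $v_\gamma$ means $v_\gamma=\dfrac{v}{1-\frac{v^2}{s^2}}$. *)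

theory Defs
  imports Complex_Main
begin

definition mobius_disc :: "real \<Rightarrow> complex set" where
  "mobius_disc s = {z. cmod z < s}"

definition mobius_add :: "real \<Rightarrow> complex \<Rightarrow> complex \<Rightarrow> complex" where
  "mobius_add s a b = (a + b) / (1 + cnj a * b / (complex_of_real s)\<^sup>2)"

definition mobius_scale :: "real \<Rightarrow> real \<Rightarrow> complex \<Rightarrow> complex" where
  "mobius_scale s r a =
     (if a = 0 then 0
      else complex_of_real (s * tanh (r * artanh (cmod a / s))) * (a / complex_of_real (cmod a)))"

definition gyroline :: "real \<Rightarrow> complex \<Rightarrow> complex \<Rightarrow> complex set" where
  "gyroline s A B = {mobius_add s A (mobius_scale s t (mobius_add s (- A) B)) | t. True}"

definition gyrosegment :: "real \<Rightarrow> complex \<Rightarrow> complex \<Rightarrow> complex set" where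
  "gyrosegment s B C = {mobius_add s B (mobius_scale s t (mobius_add s (- B) C)) | t. 0 \<le> t \<and> t \<le> 1}"

definition is_gyroline :: "real \<Rightarrow> complex set \<Rightarrow> bool" where
  "is_gyroline s L \<longleftrightarrow> (\<exists>X Y. X \<in> mobius_disc s \<and> Y \<in> mobius_disc s \<and> X \<noteq> Y \<and> L = gyroline s X Y)"

definition gyrotriangle :: "real \<Rightarrow> complex \<Rightarrow> complex \<Rightarrow> complex \<Rightarrow> bool" where
  "gyrotriangle s A B C \<longleftrightarrow> A \<in> mobius_disc s \<and> B \<in> mobius_disc s \<and> C \<in> mobius_disc s \<and>
     A \<noteq> B \<and> A \<noteq> C \<and> B \<noteq> C \<and> C \<notin> gyroline s A B"

definition gyrodist :: "real \<Rightarrow> complex \<Rightarrow> complex \<Rightarrow> real" where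
  "gyrodist s P Q = cmod (mobius_add s (- P) Q)"

definition gamma_len :: "real \<Rightarrow> real \<Rightarrow> real" where
  "gamma_len s v = v / (1 - v\<^sup>2 / s\<^sup>2)"

end

theory Submission
  imports Defs
begin


lemma tanh_artanh_real:
  fixes y :: real assumes "\<bar>y\<bar> < 1" shows "tanh (artanh y) = y"
proof -
  have p: "(1+y)/(1-y) > 0" using assms by (auto simp: abs_less_iff)
  have "exp (- 2 * artanh y) = (1-y)/(1+y)"
    using p assms by (simp add: artanh_def exp_minus exp_ln)
  then have "tanh (artanh y) = (1 - (1-y)/(1+y)) / (1 + (1-y)/(1+y))" by (simp add: tanh_real_altdef)
  also have "\<dots> = y" using assms by (simp add: field_simps abs_less_iff)
  finally show ?thesis .
qed

lemma madd_alt: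
  assumes "s \<noteq> 0"
  shows "mobius_add s a b = (complex_of_real s)\<^sup>2 * (a+b) / ((complex_of_real s)\<^sup>2 + cnj a * b)"
proof -
  have S: "(complex_of_real s)\<^sup>2 \<noteq> 0" using assms by simp
  have "1 + cnj a * b / (complex_of_real s)\<^sup>2 = ((complex_of_real s)\<^sup>2 + cnj a * b) / (complex_of_real s)\<^sup>2"
    using S by (simp add: field_simps)
  then show ?thesis unfolding mobius_add_def by simp
qed

lemma normid:
  fixes a b :: complex and s :: real
  shows "(cmod (complex_of_real (s^2) + cnj a * b))\<^sup>2 - s^2 * (cmod (a+b))\<^sup>2 = (s^2 - (cmod a)^2) * (s^2 - (cmod b)^2)"
  apply (simp only: cmod_power2)
  apply (simp add: power2_eq_square algebra_simps)
  done

lemma den_pos: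
  assumes "s > 0" "cmod a < s" "cmod b < s"
  shows "(cmod ((complex_of_real s)\<^sup>2 + cnj a * b))\<^sup>2 = s^2 * (cmod (a+b))\<^sup>2 + (s^2 - (cmod a)^2) * (s^2 - (cmod b)^2)"
    and "(s^2 - (cmod a)^2) * (s^2 - (cmod b)^2) > 0"
    and "(complex_of_real s)\<^sup>2 + cnj a * b \<noteq> 0"
proof -
  show 1: "(cmod ((complex_of_real s)\<^sup>2 + cnj a * b))\<^sup>2 = s^2 * (cmod (a+b))\<^sup>2 + (s^2 - (cmod a)^2) * (s^2 - (cmod b)^2)"
    using normid[of s a b] by simp
  have "(cmod a)^2 < s^2" "(cmod b)^2 < s^2" using assms by (simp_all add: power_strict_mono)
  then show 2: "(s^2 - (cmod a)^2) * (s^2 - (cmod b)^2) > 0" by simp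
  have "(cmod ((complex_of_real s)\<^sup>2 + cnj a * b))\<^sup>2 > 0" using 1 2
    by (smt (verit) zero_le_power2 mult_nonneg_nonneg)
  then show "(complex_of_real s)\<^sup>2 + cnj a * b \<noteq> 0" by auto
qed

lemma madd_disc:
  assumes "s > 0" "cmod a < s" "cmod b < s"
  shows "cmod (mobius_add s a b) < s"
proof -
  note d = den_pos[OF assms]
  have "cmod (mobius_add s a b) = s^2 * cmod (a+b) / cmod ((complex_of_real s)\<^sup>2 + cnj a * b)"
    using assms by (simp add: madd_alt norm_mult norm_divide norm_power)
  also have "\<dots> < s"
  proof -
    let ?D = "cmod ((complex_of_real s)\<^sup>2 + cnj a * b)"
    have Dp: "?D > 0" using d(3) by simp
    have "(s * cmod (a+b))^2 < ?D^2" using d(1,2) by (simp add: power_mult_distrib)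
    then have "s * cmod (a+b) < ?D" using Dp by (smt (verit) power_mono)
    then have "s * (s * cmod (a+b)) < s * ?D" using assms(1) by simp
    then show ?thesis using Dp by (simp add: field_simps power2_eq_square)
  qed
  finally show ?thesis .
qed

lemma alg_cdiff:
  fixes S a a' x x' y :: "'a::field"
  assumes "S + a * x' \<noteq> 0" "S + a' * y \<noteq> 0"
  shows "S - (S * (a' + x') / (S + a * x')) * (S * (a + y) / (S + a' * y)) = S * (S - a * a') * (S - x' * y) / ((S + a * x') * (S + a' * y))"
proof -
  define D where "D = (S + a * x') * (S + a' * y)"
  have D: "D \<noteq> 0" using assms by (simp add: D_def)
  have "S - (S * (a' + x') / (S + a * x')) * (S * (a + y) / (S + a' * y)) = S - ((S * (a' + x'))*(S * (a + y))) / D"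
    by (simp add: D_def)
  also have "\<dots> = (S*D - (S * (a' + x'))*(S * (a + y))) / D"
    using D by (simp add: field_simps)
  also have "S*D - (S * (a' + x'))*(S * (a + y)) = S * (S - a * a') * (S - x' * y)"
    by (simp add: D_def algebra_simps)
  finally show ?thesis by (simp add: D_def)
qed
lemma alg_diff:
  fixes S a a' x y :: "'a::field"
  assumes "S + a' * x \<noteq> 0" "S + a' * y \<noteq> 0"
  shows "S * (a + y) / (S + a' * y) - S * (a + x) / (S + a' * x) = S * (S - a * a') * (y - x) / ((S + a' * x) * (S + a' * y))"
proof -
  have "S * (a + y) / (S + a' * y) - S * (a + x) / (S + a' * x) = (S * (a + y) * (S + a' * x) - S * (a + x) * (S + a' * y)) / ((S + a' * x) * (S + a' * y))"
    using assms by (simp add: divide_simps)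
  also have "S * (a + y) * (S + a' * x) - S * (a + x) * (S + a' * y) = S * (S - a * a') * (y - x)"
    by (simp add: algebra_simps)
  finally show ?thesis .
qed

lemma alg_cancel:
  fixes S a a' w :: "'a::field"
  assumes "S \<noteq> 0" "S + a' * w \<noteq> 0" "S - a * a' \<noteq> 0"
  shows "S * (- a + S * (a + w) / (S + a' * w)) / (S + (- a') * (S * (a + w) / (S + a' * w))) = w"
proof -
  define d where "d = S + a' * w"
  have d: "d \<noteq> 0" using assms d_def by simp
  have n: "- a + S * (a + w) / d = w * (S - a * a') / d" using d by (simp add: field_simps d_def)
  have m: "S + (- a') * (S * (a + w) / d) = S * (S - a * a') / d" using d by (simp add: field_simps d_def)
  show ?thesis unfolding d_def[symmetric] n m using assms d by (simp add: field_simps)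
qed

lemma madd_diff:
  assumes "s \<noteq> 0" "(complex_of_real s)\<^sup>2 + cnj a * x \<noteq> 0" "(complex_of_real s)\<^sup>2 + cnj a * y \<noteq> 0"
  shows "mobius_add s a y - mobius_add s a x = (complex_of_real s)\<^sup>2 * ((complex_of_real s)\<^sup>2 - a * cnj a) * (y - x)
     / (((complex_of_real s)\<^sup>2 + cnj a * x) * ((complex_of_real s)\<^sup>2 + cnj a * y))"
  unfolding madd_alt[OF assms(1)] using alg_diff[OF assms(2,3)] .

lemma madd_cnj:
  assumes "s \<noteq> 0"
  shows "cnj (mobius_add s a x) = (complex_of_real s)\<^sup>2 * (cnj a + cnj x) / ((complex_of_real s)\<^sup>2 + a * cnj x)"
  by (simp add: madd_alt[OF assms])

lemma madd_cdiff:
  assumes "s \<noteq> 0" "(complex_of_real s)\<^sup>2 + cnj a * x \<noteq> 0" "(complex_of_real s)\<^sup>2 + cnj a * y \<noteq> 0"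
  shows "(complex_of_real s)\<^sup>2 - cnj (mobius_add s a x) * mobius_add s a y = (complex_of_real s)\<^sup>2 * ((complex_of_real s)\<^sup>2 - a * cnj a) * ((complex_of_real s)\<^sup>2 - cnj x * y)
     / (cnj ((complex_of_real s)\<^sup>2 + cnj a * x) * ((complex_of_real s)\<^sup>2 + cnj a * y))"
proof -
  have e: "cnj ((complex_of_real s)\<^sup>2 + cnj a * x) = (complex_of_real s)\<^sup>2 + a * cnj x" by simp
  have c: "(complex_of_real s)\<^sup>2 + a * cnj x \<noteq> 0" using assms(2) e by (metis complex_cnj_zero_iff)
  show ?thesis unfolding e madd_cnj[OF assms(1)] unfolding madd_alt[OF assms(1)] using alg_cdiff[OF c assms(3)] .
qed

lemma madd_cancel:
  assumes "s > 0" "cmod a < s" "cmod w < s"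
  shows "mobius_add s (-a) (mobius_add s a w) = w"
proof -
  have d: "(complex_of_real s)\<^sup>2 + cnj a * w \<noteq> 0" using den_pos[OF assms] by simp
  have K: "(complex_of_real s)\<^sup>2 - a * cnj a \<noteq> 0"
  proof
    assume "(complex_of_real s)\<^sup>2 - a * cnj a = 0"
    then have "complex_of_real (s^2 - (cmod a)^2) = 0" by (simp add: complex_norm_square[symmetric])
    then have "s^2 = (cmod a)^2" by (simp only: of_real_eq_0_iff)
    moreover have "(cmod a)^2 < s^2" using assms by (simp add: power_strict_mono)
    ultimately show False by simp
  qed
  have S: "(complex_of_real s)\<^sup>2 \<noteq> 0" using assms by simp
  have s0: "s \<noteq> 0" using assms by simp
  have i: "mobius_add s a w = (complex_of_real s)\<^sup>2 * (a + w) / ((complex_of_real s)\<^sup>2 + cnj a * w)" by (rule madd_alt[OF s0])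
  have o: "mobius_add s (-a) z = (complex_of_real s)\<^sup>2 * (- a + z) / ((complex_of_real s)\<^sup>2 + (- cnj a) * z)" for z
    using madd_alt[OF s0, of "-a" z] by simp
  show ?thesis unfolding i o using alg_cancel[OF S d K] .
qed
lemma K_ne:
  assumes "s > 0" "cmod a < s"
  shows "(complex_of_real s)\<^sup>2 - a * cnj a \<noteq> 0"
proof
  assume "(complex_of_real s)\<^sup>2 - a * cnj a = 0"
  then have "complex_of_real (s^2 - (cmod a)^2) = 0" by (simp add: complex_norm_square[symmetric])
  then have "s^2 = (cmod a)^2" by (simp only: of_real_eq_0_iff)
  moreover have "(cmod a)^2 < s^2" using assms by (simp add: power_strict_mono)
  ultimately show False by simp
qed

lemma gd_alt:
  assumes "s \<noteq> 0"
  shows "gyrodist s x y = s^2 * cmod (y - x) / cmod ((complex_of_real s)\<^sup>2 - cnj x * y)"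
proof -
  have "mobius_add s (-x) y = (complex_of_real s)\<^sup>2 * (y - x) / ((complex_of_real s)\<^sup>2 - cnj x * y)"
    using madd_alt[OF assms, of "-x" y] by simp
  then show ?thesis unfolding gyrodist_def by (simp add: norm_mult norm_divide norm_power)
qed

lemma gd_inv:
  assumes "s > 0" "cmod a < s" "cmod x < s" "cmod y < s"
  shows "gyrodist s (mobius_add s a x) (mobius_add s a y) = gyrodist s x y"
proof -
  have s0: "s \<noteq> 0" using assms by simp
  have dx: "(complex_of_real s)\<^sup>2 + cnj a * x \<noteq> 0" using den_pos[OF assms(1,2,3)] by simp
  have dy: "(complex_of_real s)\<^sup>2 + cnj a * y \<noteq> 0" using den_pos[OF assms(1,2,4)] by simp
  have K: "(complex_of_real s)\<^sup>2 - a * cnj a \<noteq> 0" using K_ne assms by simp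
  define k where "k = cmod ((complex_of_real s)\<^sup>2 - a * cnj a)"
  define px where "px = cmod ((complex_of_real s)\<^sup>2 + cnj a * x)"
  define py where "py = cmod ((complex_of_real s)\<^sup>2 + cnj a * y)"
  have kp: "k > 0" "px > 0" "py > 0" using K dx dy by (auto simp: k_def px_def py_def)
  have 1: "cmod (mobius_add s a y - mobius_add s a x) = s^2 * k * cmod (y - x) / (px * py)"
    unfolding madd_diff[OF s0 dx dy] by (simp add: norm_mult norm_divide norm_power k_def px_def py_def)
  have 2: "cmod ((complex_of_real s)\<^sup>2 - cnj (mobius_add s a x) * mobius_add s a y) = s^2 * k * cmod ((complex_of_real s)\<^sup>2 - cnj x * y) / (px * py)"
  proof -
    have "cnj ((complex_of_real s)\<^sup>2 + cnj a * x) = (complex_of_real s)\<^sup>2 + a * cnj x" by simp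
    then have c0: "cmod ((complex_of_real s)\<^sup>2 + a * cnj x) = px" unfolding px_def by (metis complex_mod_cnj)
    show ?thesis unfolding madd_cdiff[OF s0 dx dy] by (simp add: norm_mult norm_divide norm_power k_def py_def c0)
  qed
  show ?thesis unfolding gd_alt[OF s0] 1 2 using kp s0 by (simp add: field_simps eval_nat_numeral)
qed

lemma gl_formula:
  assumes "s > 0" "cmod x < s" "cmod y < s"
  shows "gamma_len s (gyrodist s x y) = s^2 * cmod (y - x) * cmod ((complex_of_real s)\<^sup>2 - cnj x * y) / ((s^2 - (cmod x)^2) * (s^2 - (cmod y)^2))"
proof -
  have s0: "s \<noteq> 0" using assms by simp
  note dp = den_pos[OF assms(1) _ assms(3), of "-x"]
  have nx: "cmod (-x) < s" using assms by simp
  define D where "D = cmod ((complex_of_real s)\<^sup>2 - cnj x * y)"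
  define P where "P = (s^2 - (cmod x)^2) * (s^2 - (cmod y)^2)"
  have e: "D^2 = s^2 * (cmod (y - x))^2 + P" using dp(1)[OF nx] by (simp add: D_def P_def)
  have Pp: "P > 0" using dp(2)[OF nx] by (simp add: P_def)
  have Dp: "D > 0" using dp(3)[OF nx] by (simp add: D_def)
  have "gamma_len s (gyrodist s x y) = (s^2 * cmod (y - x) / D) / (1 - (s^2 * cmod (y - x) / D)^2 / s^2)"
    unfolding gamma_len_def gd_alt[OF s0] D_def ..
  also have "1 - (s^2 * cmod (y - x) / D)^2 / s^2 = P / D^2"
  proof -
    have "(s^2 * cmod (y - x) / D)^2 / s^2 = s^2 * (cmod (y - x))^2 / D^2"
      using Dp s0 by (simp add: field_simps power2_eq_square)
    moreover have "1 - s^2 * (cmod (y - x))^2 / D^2 = (D^2 - s^2 * (cmod (y - x))^2) / D^2"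
      using Dp by (simp add: field_simps)
    ultimately show ?thesis using e by simp
  qed
  also have "(s^2 * cmod (y - x) / D) / (P / D^2) = s^2 * cmod (y - x) * D / P"
    using Dp Pp by (simp add: field_simps power2_eq_square)
  finally show ?thesis by (simp add: D_def P_def)
qed


lemma fr: fixes S X N d :: "'a::field" assumes "S \<noteq> 0" "d \<noteq> 0"
  shows "S * (X / d) / (S * N / d) = X / N"
  using assms by (cases "N = 0") (simp_all add: divide_simps)

lemma alg_assoc:
  fixes S a a' u u' w :: "'a::field"
  assumes S: "S \<noteq> 0" and d1: "S + u' * w \<noteq> 0" and d2: "S + a' * u \<noteq> 0" and d3: "S + a * u' \<noteq> 0"
    and d4: "S + a' * (S * (u + w) / (S + u' * w)) \<noteq> 0"
  shows "S * (a + S * (u + w) / (S + u' * w)) / (S + a' * (S * (u + w) / (S + u' * w)))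
       = S * (S * (a + u) / (S + a' * u) + ((S + a * u') / (S + a' * u)) * w)
         / (S + (S * (a' + u') / (S + a * u')) * (((S + a * u') / (S + a' * u)) * w))"
proof -
  define X where "X = S * a + S * u + S * w + a * u' * w"
  define N where "N = S + a' * u + a' * w + u' * w"
  have dd: "S + a' * (S * (u + w) / (S + u' * w)) = S * N / (S + u' * w)"
    using d1 by (simp add: N_def field_simps; simp add: algebra_simps)
  have N: "N \<noteq> 0" using d4 unfolding dd using S d1 by simp
  have nn: "a + S * (u + w) / (S + u' * w) = X / (S + u' * w)"
    using d1 by (simp add: X_def field_simps; simp add: algebra_simps)
  have L: "S * (a + S * (u + w) / (S + u' * w)) / (S + a' * (S * (u + w) / (S + u' * w))) = X / N"
    unfolding dd nn using fr[OF S d1] .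
  have r1: "S * (a + u) / (S + a' * u) + ((S + a * u') / (S + a' * u)) * w = X / (S + a' * u)"
  proof -
    have "S * (a + u) / (S + a' * u) + ((S + a * u') / (S + a' * u)) * w = (S * (a + u) + (S + a * u') * w) / (S + a' * u)"
      by (simp only: times_divide_eq_left add_divide_distrib[symmetric])
    also have "S * (a + u) + (S + a * u') * w = X" by (simp add: X_def algebra_simps)
    finally show ?thesis .
  qed
  have r2: "S + (S * (a' + u') / (S + a * u')) * (((S + a * u') / (S + a' * u)) * w) = S * N / (S + a' * u)"
  proof -
    have "(S * (a' + u') / (S + a * u')) * (((S + a * u') / (S + a' * u)) * w) = S * (a' + u') * w / (S + a' * u)"
      using d3 by simp
    moreover have "S + S * (a' + u') * w / (S + a' * u) = (S * (S + a' * u) + S * (a' + u') * w) / (S + a' * u)"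
      using d2 by (simp add: field_simps)
    moreover have "S * (S + a' * u) + S * (a' + u') * w = S * N" by (simp add: N_def algebra_simps)
    ultimately show ?thesis by (metis (no_types, lifting))
  qed
  have R: "S * (S * (a + u) / (S + a' * u) + ((S + a * u') / (S + a' * u)) * w)
         / (S + (S * (a' + u') / (S + a * u')) * (((S + a * u') / (S + a' * u)) * w)) = X / N"
    unfolding r1 r2 using fr[OF S d2] .
  show ?thesis using L R by simp
qed

lemma madd_assoc:
  assumes s: "s > 0" and a: "cmod a < s" and u: "cmod u < s" and w: "cmod w < s"
  shows "mobius_add s a (mobius_add s u w) =
    mobius_add s (mobius_add s a u) (((complex_of_real s)\<^sup>2 + a * cnj u) / ((complex_of_real s)\<^sup>2 + cnj a * u) * w)"
proof -
  have s0: "s \<noteq> 0" using s by simp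
  have S: "(complex_of_real s)\<^sup>2 \<noteq> 0" using s by simp
  have d1: "(complex_of_real s)\<^sup>2 + cnj u * w \<noteq> 0" using den_pos[OF s u w] by simp
  have d2: "(complex_of_real s)\<^sup>2 + cnj a * u \<noteq> 0" using den_pos[OF s a u] by simp
  have d3: "(complex_of_real s)\<^sup>2 + a * cnj u \<noteq> 0" using den_pos[OF s u a] by (simp add: mult.commute)
  have d4: "(complex_of_real s)\<^sup>2 + cnj a * ((complex_of_real s)\<^sup>2 * (u + w) / ((complex_of_real s)\<^sup>2 + cnj u * w)) \<noteq> 0"
    using den_pos[OF s a madd_disc[OF s u w]] madd_alt[OF s0, of u w] by simp
  have L: "mobius_add s a (mobius_add s u w) = (complex_of_real s)\<^sup>2 * (a + (complex_of_real s)\<^sup>2 * (u + w) / ((complex_of_real s)\<^sup>2 + cnj u * w))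
     / ((complex_of_real s)\<^sup>2 + cnj a * ((complex_of_real s)\<^sup>2 * (u + w) / ((complex_of_real s)\<^sup>2 + cnj u * w)))"
    by (simp only: madd_alt[OF s0])
  have R: "mobius_add s (mobius_add s a u) z = (complex_of_real s)\<^sup>2 * (mobius_add s a u + z) / ((complex_of_real s)\<^sup>2 + cnj (mobius_add s a u) * z)" for z
    by (rule madd_alt[OF s0])
  show ?thesis unfolding L R madd_cnj[OF s0] unfolding madd_alt[OF s0, of a u]
    by (rule alg_assoc[OF S d1 d2 d3 d4])
qed

lemma lam_norm:
  assumes "s > 0" "cmod a < s" "cmod u < s"
  shows "cmod (((complex_of_real s)\<^sup>2 + a * cnj u) / ((complex_of_real s)\<^sup>2 + cnj a * u)) = 1"
proof -
  have d2: "(complex_of_real s)\<^sup>2 + cnj a * u \<noteq> 0" using den_pos[OF assms] by simp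
  have "cnj ((complex_of_real s)\<^sup>2 + cnj a * u) = (complex_of_real s)\<^sup>2 + a * cnj u" by simp
  then have "cmod ((complex_of_real s)\<^sup>2 + a * cnj u) = cmod ((complex_of_real s)\<^sup>2 + cnj a * u)" by (metis complex_mod_cnj)
  then show ?thesis using d2 by (simp add: norm_divide)
qed

definition gline :: "real \<Rightarrow> complex \<Rightarrow> complex \<Rightarrow> complex set" where
  "gline s U e = {mobius_add s U (complex_of_real \<alpha> * e) | \<alpha>. \<bar>\<alpha>\<bar> < s}"

lemma gline_disc:
  assumes "s > 0" "cmod U < s" "cmod e = 1" "X \<in> gline s U e"
  shows "cmod X < s"
  using assms unfolding gline_def by (auto intro!: madd_disc simp: norm_mult)

lemma gline_trans:
  assumes s: "s > 0" and a: "cmod a < s" and U: "cmod U < s" and e: "cmod e = 1" and X: "X \<in> gline s U e"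
  shows "mobius_add s a X \<in> gline s (mobius_add s a U)
     ((((complex_of_real s)\<^sup>2 + a * cnj U) / ((complex_of_real s)\<^sup>2 + cnj a * U)) * e)"
proof -
  obtain \<alpha> where al: "\<bar>\<alpha>\<bar> < s" and X: "X = mobius_add s U (complex_of_real \<alpha> * e)"
    using X unfolding gline_def by auto
  have w: "cmod (complex_of_real \<alpha> * e) < s" using al e by (simp add: norm_mult)
  have "mobius_add s a X = mobius_add s (mobius_add s a U) (complex_of_real \<alpha> *
     ((((complex_of_real s)\<^sup>2 + a * cnj U) / ((complex_of_real s)\<^sup>2 + cnj a * U)) * e))"
    unfolding X madd_assoc[OF s a U w] by (simp add: ac_simps)
  then show ?thesis using al unfolding gline_def by blast
qed



lemma ecnj: assumes "cmod e = 1" shows "e * cnj e = 1"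
  using complex_norm_square[of e] assms by simp

lemma G1:
  assumes s: "s > 0" and U: "cmod U < s" and e: "cmod e = 1" and al: "\<bar>\<alpha>\<bar> < s" and ga: "\<bar>\<gamma>\<bar> < s"
  shows "cmod ((mobius_add s U (complex_of_real \<gamma> * e) - mobius_add s U (complex_of_real \<alpha> * e)) *
     ((complex_of_real s)\<^sup>2 - cnj (mobius_add s U (complex_of_real \<alpha> * e)) * mobius_add s U (complex_of_real \<gamma> * e)))
   = s^4 * (s^2 - (cmod U)^2)^2 * \<bar>\<gamma> - \<alpha>\<bar> * \<bar>s^2 - \<alpha> * \<gamma>\<bar>
     / ((cmod ((complex_of_real s)\<^sup>2 + cnj U * (complex_of_real \<alpha> * e)))^2 * (cmod ((complex_of_real s)\<^sup>2 + cnj U * (complex_of_real \<gamma> * e)))^2)"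
proof -
  have s0: "s \<noteq> 0" using s by simp
  have wa: "cmod (complex_of_real \<alpha> * e) < s" using al e by (simp add: norm_mult)
  have wg: "cmod (complex_of_real \<gamma> * e) < s" using ga e by (simp add: norm_mult)
  have dx: "(complex_of_real s)\<^sup>2 + cnj U * (complex_of_real \<alpha> * e) \<noteq> 0" using den_pos[OF s U wa] by simp
  have dy: "(complex_of_real s)\<^sup>2 + cnj U * (complex_of_real \<gamma> * e) \<noteq> 0" using den_pos[OF s U wg] by simp
  have ee: "e * cnj e = 1" using ecnj[OF e] .
  have k: "(complex_of_real s)\<^sup>2 - U * cnj U = complex_of_real (s^2 - (cmod U)^2)"
    by (simp add: complex_norm_square[symmetric])
  have kp: "s^2 - (cmod U)^2 > 0" using U s by (simp add: power_strict_mono)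
  have a1: "complex_of_real \<gamma> * e - complex_of_real \<alpha> * e = complex_of_real (\<gamma> - \<alpha>) * e" by (simp add: algebra_simps)
  have a2: "(complex_of_real s)\<^sup>2 - cnj (complex_of_real \<alpha> * e) * (complex_of_real \<gamma> * e) = complex_of_real (s^2 - \<alpha> * \<gamma>)"
  proof -
    have "cnj (complex_of_real \<alpha> * e) * (complex_of_real \<gamma> * e) = complex_of_real (\<alpha> * \<gamma>) * (e * cnj e)" by (simp add: ac_simps)
    then show ?thesis using ee by simp
  qed
  have c0: "cmod (cnj ((complex_of_real s)\<^sup>2 + cnj U * (complex_of_real \<alpha> * e))) = cmod ((complex_of_real s)\<^sup>2 + cnj U * (complex_of_real \<alpha> * e))"
    by (rule complex_mod_cnj)
  show ?thesis
    unfolding madd_diff[OF s0 dx dy] madd_cdiff[OF s0 dx dy] k a1 a2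
    apply (simp only: norm_mult norm_divide norm_of_real norm_power c0 e abs_of_pos[OF kp] abs_of_pos[OF s])
    apply (simp add: power2_eq_square field_simps eval_nat_numeral)
    done
qed

lemma Im_ofr_mult: "Im (complex_of_real r * z) = r * Im z" by simp

lemma Im_lin:
  fixes U V :: complex and p q b c :: real
  shows "Im (cnj (complex_of_real p * U + complex_of_real b * V) * (complex_of_real q * U + complex_of_real c * V))
     = (p * c - b * q) * Im (cnj U * V)"
  by (simp add: algebra_simps)

lemma Fform:
  assumes "e * cnj e = 1"
  shows "(U + complex_of_real t * e) * ((complex_of_real s)\<^sup>2 + U * cnj (complex_of_real t * e))
    = complex_of_real (s^2 + t^2) * U + complex_of_real t * (U^2 * cnj e + (complex_of_real s)\<^sup>2 * e)"
proof -
  have "(U + complex_of_real t * e) * ((complex_of_real s)\<^sup>2 + U * cnj (complex_of_real t * e))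
     = complex_of_real (s^2) * U + complex_of_real t * (U^2 * cnj e + (complex_of_real s)\<^sup>2 * e) + complex_of_real (t^2) * U * (e * cnj e)"
    by (simp add: algebra_simps power2_eq_square)
  then show ?thesis using assms by (simp add: algebra_simps)
qed

lemma ImUV:
  shows "Im (cnj U * (U^2 * cnj e + (complex_of_real s)\<^sup>2 * e)) = (s^2 - (cmod U)^2) * Im (cnj U * e)"
  apply (simp only: cmod_power2)
  apply (simp add: power2_eq_square algebra_simps)
  done

lemma G2:
  assumes s: "s > 0" and U: "cmod U < s" and e: "cmod e = 1" and be: "\<bar>\<beta>\<bar> < s" and ga: "\<bar>\<gamma>\<bar> < s"
  shows "\<bar>Im (cnj (mobius_add s U (complex_of_real \<beta> * e)) * mobius_add s U (complex_of_real \<gamma> * e))\<bar>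
   = s^4 * (s^2 - (cmod U)^2) * \<bar>Im (cnj U * e)\<bar> * \<bar>\<gamma> - \<beta>\<bar> * \<bar>s^2 - \<beta> * \<gamma>\<bar>
     / ((cmod ((complex_of_real s)\<^sup>2 + cnj U * (complex_of_real \<beta> * e)))^2 * (cmod ((complex_of_real s)\<^sup>2 + cnj U * (complex_of_real \<gamma> * e)))^2)"
proof -
  have s0: "s \<noteq> 0" using s by simp
  have wb: "cmod (complex_of_real \<beta> * e) < s" using be e by (simp add: norm_mult)
  have wg: "cmod (complex_of_real \<gamma> * e) < s" using ga e by (simp add: norm_mult)
  define db where "db = (complex_of_real s)\<^sup>2 + cnj U * (complex_of_real \<beta> * e)"
  define dg where "dg = (complex_of_real s)\<^sup>2 + cnj U * (complex_of_real \<gamma> * e)"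
  define yb where "yb = U + complex_of_real \<beta> * e"
  define zg where "zg = U + complex_of_real \<gamma> * e"
  have db: "db \<noteq> 0" using den_pos[OF s U wb] by (simp add: db_def)
  have dg: "dg \<noteq> 0" using den_pos[OF s U wg] by (simp add: dg_def)
  have ee: "e * cnj e = 1" using ecnj[OF e] .
  have cdb: "cnj db = (complex_of_real s)\<^sup>2 + U * cnj (complex_of_real \<beta> * e)" by (simp add: db_def)
  have cdg: "cnj dg = (complex_of_real s)\<^sup>2 + U * cnj (complex_of_real \<gamma> * e)" by (simp add: dg_def)
  have Y: "cnj (mobius_add s U (complex_of_real \<beta> * e)) = (complex_of_real s)\<^sup>2 * cnj yb / cnj db"
    unfolding madd_cnj[OF s0] cdb yb_def by simp
  have Z: "mobius_add s U (complex_of_real \<gamma> * e) = (complex_of_real s)\<^sup>2 * zg / dg"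
    unfolding madd_alt[OF s0] zg_def dg_def ..
  define r where "r = s^4 / ((cmod db)^2 * (cmod dg)^2)"
  have nb: "db * cnj db = complex_of_real ((cmod db)^2)" by (rule complex_norm_square[symmetric])
  have ng: "dg * cnj dg = complex_of_real ((cmod dg)^2)" by (rule complex_norm_square[symmetric])
  have cdb0: "cnj db \<noteq> 0" using db by simp
  have prod: "cnj (mobius_add s U (complex_of_real \<beta> * e)) * mobius_add s U (complex_of_real \<gamma> * e)
      = complex_of_real r * (cnj (yb * cnj db) * (zg * cnj dg))"
  proof -
    have "cnj (mobius_add s U (complex_of_real \<beta> * e)) * mobius_add s U (complex_of_real \<gamma> * e)
        = (complex_of_real s)\<^sup>2 * (complex_of_real s)\<^sup>2 * (cnj yb * zg) * (db * cnj dg) / ((db * cnj db) * (dg * cnj dg))"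
      unfolding Y Z using db dg cdb0 by (simp add: field_simps)
    also have "\<dots> = complex_of_real r * (cnj (yb * cnj db) * (zg * cnj dg))"
      unfolding nb ng r_def by (simp add: field_simps eval_nat_numeral)
    finally show ?thesis .
  qed
  define V where "V = U^2 * cnj e + (complex_of_real s)\<^sup>2 * e"
  have Fb: "yb * cnj db = complex_of_real (s^2 + \<beta>^2) * U + complex_of_real \<beta> * V"
    unfolding yb_def cdb V_def by (rule Fform[OF ee])
  have Fg: "zg * cnj dg = complex_of_real (s^2 + \<gamma>^2) * U + complex_of_real \<gamma> * V"
    unfolding zg_def cdg V_def by (rule Fform[OF ee])
  have "Im (cnj (mobius_add s U (complex_of_real \<beta> * e)) * mobius_add s U (complex_of_real \<gamma> * e))
      = r * (((s^2 + \<beta>^2) * \<gamma> - \<beta> * (s^2 + \<gamma>^2)) * ((s^2 - (cmod U)^2) * Im (cnj U * e)))"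
    unfolding prod Fb Fg Im_ofr_mult Im_lin V_def ImUV ..
  also have "((s^2 + \<beta>^2) * \<gamma> - \<beta> * (s^2 + \<gamma>^2)) = (\<gamma> - \<beta>) * (s^2 - \<beta> * \<gamma>)"
    by (simp add: algebra_simps power2_eq_square)
  finally have I: "Im (cnj (mobius_add s U (complex_of_real \<beta> * e)) * mobius_add s U (complex_of_real \<gamma> * e))
      = r * ((\<gamma> - \<beta>) * (s^2 - \<beta> * \<gamma>) * ((s^2 - (cmod U)^2) * Im (cnj U * e)))" .
  have kp: "s^2 - (cmod U)^2 > 0" using U s by (simp add: power_strict_mono)
  have rp: "r \<ge> 0" unfolding r_def by simp
  have "\<bar>r * ((\<gamma> - \<beta>) * (s^2 - \<beta> * \<gamma>) * ((s^2 - (cmod U)^2) * Im (cnj U * e)))\<bar>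
     = r * ((s^2 - (cmod U)^2) * \<bar>Im (cnj U * e)\<bar> * \<bar>\<gamma> - \<beta>\<bar> * \<bar>s^2 - \<beta> * \<gamma>\<bar>)"
    by (simp only: abs_mult abs_of_nonneg[OF rp] abs_of_pos[OF kp] mult_ac)
  also have "\<dots> = s^4 * (s^2 - (cmod U)^2) * \<bar>Im (cnj U * e)\<bar> * \<bar>\<gamma> - \<beta>\<bar> * \<bar>s^2 - \<beta> * \<gamma>\<bar>
     / ((cmod ((complex_of_real s)\<^sup>2 + cnj U * (complex_of_real \<beta> * e)))^2 * (cmod ((complex_of_real s)\<^sup>2 + cnj U * (complex_of_real \<gamma> * e)))^2)"
    unfolding r_def db_def dg_def by (simp add: mult_ac)
  finally show ?thesis unfolding I .
qed

lemma swap4: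
  fixes A B x1 x2 y1 y2 P Q G :: real
  shows "(A * x1 * x2 / (P * G)) * (B * y1 * y2 / (Q * G)) = (A * y1 * y2 / (Q * G)) * (B * x1 * x2 / (P * G))"
  by (simp add: field_simps)

lemma Lkey:
  assumes s: "s > 0" and U: "cmod U < s" and e: "cmod e = 1"
    and X: "X \<in> gline s U e" and Y: "Y \<in> gline s U e" and Z: "Z \<in> gline s U e"
  shows "cmod ((Z - X) * ((complex_of_real s)\<^sup>2 - cnj X * Z)) * \<bar>Im (cnj Y * Z)\<bar>
       = cmod ((Z - Y) * ((complex_of_real s)\<^sup>2 - cnj Y * Z)) * \<bar>Im (cnj X * Z)\<bar>"
proof -
  obtain \<alpha> where al: "\<bar>\<alpha>\<bar> < s" and Xe: "X = mobius_add s U (complex_of_real \<alpha> * e)" using X unfolding gline_def by auto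
  obtain \<beta> where be: "\<bar>\<beta>\<bar> < s" and Ye: "Y = mobius_add s U (complex_of_real \<beta> * e)" using Y unfolding gline_def by auto
  obtain \<gamma> where ga: "\<bar>\<gamma>\<bar> < s" and Ze: "Z = mobius_add s U (complex_of_real \<gamma> * e)" using Z unfolding gline_def by auto
  show ?thesis unfolding Xe Ye Ze G1[OF s U e al ga] G1[OF s U e be ga] G2[OF s U e be ga] G2[OF s U e al ga]
    by (rule swap4)
qed



lemma madd_zero: "mobius_add s U 0 = U"
  by (simp add: mobius_add_def)

lemma madd_self: "mobius_add s (-A) A = 0"
  by (simp add: mobius_add_def)

lemma madd_cancel': 
  assumes "s > 0" "cmod A < s" "cmod X < s"
  shows "mobius_add s A (mobius_add s (-A) X) = X"
  using madd_cancel[of s "-A" X] assms by simp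

lemma madd_inj:
  assumes "s > 0" "cmod A < s" "cmod X < s" "cmod Y < s" "mobius_add s (-A) X = mobius_add s (-A) Y"
  shows "X = Y"
  using madd_cancel'[OF assms(1,2,3)] madd_cancel'[OF assms(1,2,4)] assms(5) by metis

lemma unit_dir: assumes "v \<noteq> 0" shows "cmod (v / complex_of_real (cmod v)) = 1"
  using assms by (simp add: norm_divide)

lemma scale_form:
  assumes s: "s > 0" and v: "v \<noteq> 0"
  shows "mobius_scale s t v = complex_of_real (s * tanh (t * artanh (cmod v / s))) * (v / complex_of_real (cmod v))"
    and "\<bar>s * tanh (t * artanh (cmod v / s))\<bar> < s"
proof -
  show "mobius_scale s t v = complex_of_real (s * tanh (t * artanh (cmod v / s))) * (v / complex_of_real (cmod v))"
    using v unfolding mobius_scale_def by simp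
  have "\<bar>tanh (t * artanh (cmod v / s))\<bar> < 1" using tanh_real_bounds[of "t * artanh (cmod v / s)"] by auto
  then show "\<bar>s * tanh (t * artanh (cmod v / s))\<bar> < s" using s by (simp add: abs_mult)
qed

lemma scale_disc:
  assumes s: "s > 0"
  shows "cmod (mobius_scale s t v) < s"
proof (cases "v = 0")
  case True then show ?thesis using s by (simp add: mobius_scale_def)
next
  case False
  show ?thesis unfolding scale_form(1)[OF s False] using scale_form(2)[OF s False] unit_dir[OF False]
    by (simp only: norm_mult norm_of_real) simp
qed

lemma scale_real:
  assumes s: "s > 0"
  shows "\<exists>\<mu>. mobius_scale s t v = complex_of_real \<mu> * v"
proof (cases "v = 0")
  case True then show ?thesis by (simp add: mobius_scale_def)
next
  case False
  show ?thesis unfolding scale_form(1)[OF s False]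
    by (rule exI[of _ "s * tanh (t * artanh (cmod v / s)) / cmod v"]) (simp add: field_simps)
qed

lemma dir_ne:
  assumes s: "s > 0" and "cmod U < s" "cmod V < s" "U \<noteq> V"
  shows "mobius_add s (-U) V \<noteq> 0"
  using madd_cancel'[OF s assms(2,3)] madd_zero[of s U] assms(4) by metis

lemma gyroline_sub:
  assumes s: "s > 0" and U: "cmod U < s" and V: "cmod V < s" and UV: "U \<noteq> V"
  shows "gyroline s U V \<subseteq> gline s U (mobius_add s (-U) V / complex_of_real (cmod (mobius_add s (-U) V)))"
proof
  fix Z assume "Z \<in> gyroline s U V"
  then obtain t where Z: "Z = mobius_add s U (mobius_scale s t (mobius_add s (-U) V))" unfolding gyroline_def by auto
  have v: "mobius_add s (-U) V \<noteq> 0" by (rule dir_ne[OF assms])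
  show "Z \<in> gline s U (mobius_add s (-U) V / complex_of_real (cmod (mobius_add s (-U) V)))"
    unfolding gline_def Z scale_form(1)[OF s v] using scale_form(2)[OF s v] by blast
qed

lemma gyroline_disc:
  assumes s: "s > 0" and U: "cmod U < s" and "Z \<in> gyroline s U V"
  shows "cmod Z < s"
  using assms unfolding gyroline_def by (auto intro!: madd_disc scale_disc)

lemma ends_gline:
  assumes s: "s > 0" and U: "cmod U < s" and V: "cmod V < s" and UV: "U \<noteq> V"
  shows "U \<in> gline s U (mobius_add s (-U) V / complex_of_real (cmod (mobius_add s (-U) V)))"
    and "V \<in> gline s U (mobius_add s (-U) V / complex_of_real (cmod (mobius_add s (-U) V)))"
proof -
  have v: "mobius_add s (-U) V \<noteq> 0" by (rule dir_ne[OF assms])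
  show "U \<in> gline s U (mobius_add s (-U) V / complex_of_real (cmod (mobius_add s (-U) V)))"
    unfolding gline_def using s madd_zero[of s U] by (auto intro!: exI[of _ 0])
  have vd: "cmod (mobius_add s (-U) V) < s" using madd_disc[OF s _ V, of "-U"] U by simp
  have "V = mobius_add s U (complex_of_real (cmod (mobius_add s (-U) V)) * (mobius_add s (-U) V / complex_of_real (cmod (mobius_add s (-U) V))))"
    using v madd_cancel'[OF s U V] by simp
  then show "V \<in> gline s U (mobius_add s (-U) V / complex_of_real (cmod (mobius_add s (-U) V)))"
  proof -
    have "\<bar>cmod (mobius_add s (-U) V)\<bar> < s" using vd by simp
    then show ?thesis unfolding gline_def using \<open>V = _\<close> by blast
  qed
qed

lemma on_line_mult:
  assumes s: "s > 0" and A: "cmod A < s" and M: "M \<in> gyroline s A B"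
  shows "\<exists>\<mu>. mobius_add s (-A) M = complex_of_real \<mu> * mobius_add s (-A) B"
proof -
  obtain t where Mt: "M = mobius_add s A (mobius_scale s t (mobius_add s (-A) B))" using M unfolding gyroline_def by auto
  have "mobius_add s (-A) M = mobius_scale s t (mobius_add s (-A) B)"
    unfolding Mt by (rule madd_cancel[OF s A scale_disc[OF s]])
  then show ?thesis using scale_real[OF s] by metis
qed

lemma backward:
  assumes s: "s > 0" and A: "cmod A < s" and B: "cmod B < s" and C: "cmod C < s"
    and b0: "mobius_add s (-A) B \<noteq> 0"
    and im: "Im (cnj (mobius_add s (-A) B) * mobius_add s (-A) C) = 0"
  shows "C \<in> gyroline s A B"
proof -
  define b where "b = mobius_add s (-A) B"
  define c where "c = mobius_add s (-A) C"
  have bd: "cmod b < s" unfolding b_def using madd_disc[OF s _ B, of "-A"] A by simp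
  have cd: "cmod c < s" unfolding c_def using madd_disc[OF s _ C, of "-A"] A by simp
  have b0': "b \<noteq> 0" using b0 b_def by simp
  define q where "q = Re (cnj b * c)"
  have q: "cnj b * c = complex_of_real q" using im unfolding q_def b_def c_def by (simp add: complex_eq_iff)
  define r where "r = q / (cmod b)^2"
  have bb: "b * cnj b = complex_of_real ((cmod b)^2)" by (rule complex_norm_square[symmetric])
  have cr: "c = complex_of_real r * b"
  proof -
    have "c * (b * cnj b) = b * (cnj b * c)" by (simp add: ac_simps)
    then have "c * complex_of_real ((cmod b)^2) = b * complex_of_real q" unfolding bb q .
    then show ?thesis using b0' unfolding r_def by (simp add: field_simps)
  qed
  have cm: "cmod c = \<bar>r\<bar> * cmod b" unfolding cr by (simp add: norm_mult)
  have bp: "cmod b > 0" using b0' by simp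
  define x where "x = r * cmod b / s"
  have x1: "\<bar>x\<bar> < 1" unfolding x_def using cm cd s bp by (simp add: abs_mult abs_divide)
  define k where "k = artanh (cmod b / s)"
  have bs: "\<bar>cmod b / s\<bar> < 1"
  proof -
    have "cmod b / s < 1" using bd s by (simp add: divide_less_eq)
    moreover have "cmod b / s \<ge> 0" using s by simp
    ultimately show ?thesis by simp
  qed
  have tk: "tanh k = cmod b / s" unfolding k_def by (rule tanh_artanh_real[OF bs])
  have k0: "k \<noteq> 0" using tk bp s by auto
  define t where "t = artanh x / k"
  have "tanh (t * k) = x" unfolding t_def using k0 tanh_artanh_real[OF x1] by simp
  then have "mobius_scale s t b = c"
    unfolding scale_form(1)[OF s b0'] k_def[symmetric] cr using s bp by (simp add: x_def field_simps)
  then have "C = mobius_add s A (mobius_scale s t b)" using madd_cancel'[OF s A C] c_def by simp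
  then show ?thesis unfolding gyroline_def b_def by blast
qed

lemma real_trans:
  fixes b c d :: complex
  assumes "Im (cnj b * d) = 0" "Im (cnj c * d) = 0" "d \<noteq> 0"
  shows "Im (cnj b * c) = 0"
proof -
  define X where "X = Re b * Im c - Im b * Re c"
  have h1: "Re b * Im d - Im b * Re d = 0" using assms(1) by simp
  have h2: "Re c * Im d - Im c * Re d = 0" using assms(2) by simp
  have "X * Im d = Im c * (Re b * Im d - Im b * Re d) - Im b * (Re c * Im d - Im c * Re d)"
    unfolding X_def by (simp add: algebra_simps)
  then have x2: "X * Im d = 0" using h1 h2 by simp
  have "X * Re d = Re c * (Re b * Im d - Im b * Re d) - Re b * (Re c * Im d - Im c * Re d)"
    unfolding X_def by (simp add: algebra_simps)
  then have x1: "X * Re d = 0" using h1 h2 by simp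
  have "Re d \<noteq> 0 \<or> Im d \<noteq> 0" using assms(3) complex_eq_iff by auto
  then have "X = 0" using x1 x2 by auto
  then show ?thesis unfolding X_def by simp
qed



lemma final_arith:
  fixes s kb kc kd km kn kp k0 Hbd Hcd Hnp Hmp Hc0 Hb0 Hn0 Hm0 mu nu pi Ja Jb :: real
  assumes pos: "s > 0" "kb > 0" "kc > 0" "kd > 0" "km > 0" "kn > 0" "kp > 0" "k0 > 0"
    "Hbd > 0" "Hcd > 0" "Hmp > 0" "Hc0 > 0" "Hb0 > 0" "mu > 0" "nu > 0" "pi > 0" "Jb > 0"
    and E1: "Hbd * Jb = Hcd * Ja"
    and E2: "Hnp * (mu * pi * Ja) = Hmp * (nu * pi * Jb)"
    and Hn0: "Hn0 = nu * Hc0" and Hm0: "Hm0 = mu * Hb0"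
  shows "s^2 * Hbd / (kb * kd) / (s^2 * Hcd / (kc * kd))
       * (s^2 * Hc0 / (kc * k0) / (s^2 * Hn0 / (kn * k0)))
       * (s^2 * Hnp / (kn * kp) / (s^2 * Hmp / (km * kp)))
       * (s^2 * Hm0 / (km * k0) / (s^2 * Hb0 / (kb * k0))) = 1"
proof -
  have Ja: "Ja = Hbd * Jb / Hcd" using E1 pos by (simp add: field_simps)
  have Jap: "Ja > 0" unfolding Ja using pos by simp
  have Hnp: "Hnp = Hmp * nu * Jb / (mu * Ja)" using E2 pos Jap by (simp add: field_simps)
  show ?thesis unfolding Hnp Ja Hn0 Hm0 using pos by (simp add: field_simps)
qed

lemma Hpos:
  assumes s: "s > 0" and "cmod x < s" "cmod y < s" "x \<noteq> y"
  shows "cmod ((y - x) * ((complex_of_real s)\<^sup>2 - cnj x * y)) > 0"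
proof -
  have "(complex_of_real s)\<^sup>2 + cnj (-x) * y \<noteq> 0" using den_pos[OF s _ assms(3), of "-x"] assms(2) by simp
  then show ?thesis using assms(4) by (simp add: norm_mult)
qed



theorem theorem5:
  fixes s :: real and A B C D M N P :: complex and l :: "complex set"
  assumes "s > 0"
    and "gyrotriangle s A B C"
    and "D \<in> gyrosegment s B C" and "D \<noteq> B" and "D \<noteq> C"
    and "is_gyroline s l"
    and "A \<notin> l" and "B \<notin> l" and "C \<notin> l"
    and "M \<in> l" and "M \<in> gyroline s A B"
    and "N \<in> l" and "N \<in> gyroline s A C"
    and "P \<in> l" and "P \<in> gyroline s A D"
  shows "gamma_len s (gyrodist s B D) / gamma_len s (gyrodist s C D)
       * (gamma_len s (gyrodist s C A) / gamma_len s (gyrodist s N A))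
       * (gamma_len s (gyrodist s N P) / gamma_len s (gyrodist s M P))
       * (gamma_len s (gyrodist s M A) / gamma_len s (gyrodist s B A)) = 1"
proof -
  note s = assms(1)
  have Ad: "cmod A < s" and Bd: "cmod B < s" and Cd: "cmod C < s" and AB: "A \<noteq> B" and AC: "A \<noteq> C"
    and BC: "B \<noteq> C" and CnAB: "C \<notin> gyroline s A B"
    using assms(2) unfolding gyrotriangle_def mobius_disc_def by auto
  have DBC: "D \<in> gyroline s B C" using assms(3) unfolding gyrosegment_def gyroline_def by blast
  have Dd: "cmod D < s" by (rule gyroline_disc[OF s Bd DBC])
  obtain X0 Y0 where X0: "cmod X0 < s" and Y0: "cmod Y0 < s" and XY: "X0 \<noteq> Y0" and l: "l = gyroline s X0 Y0"
    using assms(6) unfolding is_gyroline_def mobius_disc_def by auto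
  have Md: "cmod M < s" using gyroline_disc[OF s X0] assms(10) l by blast
  have Nd: "cmod N < s" using gyroline_disc[OF s X0] assms(12) l by blast
  have Pd: "cmod P < s" using gyroline_disc[OF s X0] assms(14) l by blast
  have nA: "cmod (-A) < s" using Ad by simp
  define T where "T = mobius_add s (-A)"
  define b where "b = T B"
  define c where "c = T C"
  define d where "d = T D"
  define m where "m = T M"
  define n where "n = T N"
  define p where "p = T P"
  have T0: "T A = 0" unfolding T_def by (rule madd_self)
  have Tdisc: "cmod (T X) < s" if "cmod X < s" for X unfolding T_def by (rule madd_disc[OF s nA that])
  have Tinj: "X = Y" if "cmod X < s" "cmod Y < s" "T X = T Y" for X Y
    using madd_inj[OF s Ad that(1,2)] that(3) unfolding T_def by simp
  have bd: "cmod b < s" "cmod c < s" "cmod d < s" "cmod m < s" "cmod n < s" "cmod p < s"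
    unfolding b_def c_def d_def m_def n_def p_def using Tdisc Bd Cd Dd Md Nd Pd by auto
  have z0: "cmod (0::complex) < s" using s by simp
  define e1 where "e1 = mobius_add s (-X0) Y0 / complex_of_real (cmod (mobius_add s (-X0) Y0))"
  have e1: "cmod e1 = 1" unfolding e1_def by (rule unit_dir[OF dir_ne[OF s X0 Y0 XY]])
  have lsub: "l \<subseteq> gline s X0 e1" unfolding l e1_def by (rule gyroline_sub[OF s X0 Y0 XY])
  define U1 where "U1 = T X0"
  define f1 where "f1 = ((complex_of_real s)\<^sup>2 + (-A) * cnj X0) / ((complex_of_real s)\<^sup>2 + cnj (-A) * X0) * e1"
  have U1: "cmod U1 < s" unfolding U1_def by (rule Tdisc[OF X0])
  have f1: "cmod f1 = 1" unfolding f1_def using lam_norm[OF s nA X0] e1 by (simp only: norm_mult)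
  have lin1: "T Z \<in> gline s U1 f1" if "Z \<in> l" for Z
    unfolding T_def U1_def f1_def using gline_trans[OF s nA X0 e1] lsub that by blast
  have mL: "m \<in> gline s U1 f1" "n \<in> gline s U1 f1" "p \<in> gline s U1 f1"
    unfolding m_def n_def p_def using lin1 assms(10,12,14) by auto
  define e2 where "e2 = mobius_add s (-B) C / complex_of_real (cmod (mobius_add s (-B) C))"
  have e2: "cmod e2 = 1" unfolding e2_def by (rule unit_dir[OF dir_ne[OF s Bd Cd BC]])
  have BCs: "B \<in> gline s B e2" "C \<in> gline s B e2" "D \<in> gline s B e2"
    unfolding e2_def using ends_gline[OF s Bd Cd BC] gyroline_sub[OF s Bd Cd BC] DBC by auto
  define U2 where "U2 = T B"
  define f2 where "f2 = ((complex_of_real s)\<^sup>2 + (-A) * cnj B) / ((complex_of_real s)\<^sup>2 + cnj (-A) * B) * e2"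
  have U2: "cmod U2 < s" unfolding U2_def by (rule Tdisc[OF Bd])
  have f2: "cmod f2 = 1" unfolding f2_def using lam_norm[OF s nA Bd] e2 by (simp only: norm_mult)
  have lin2: "T Z \<in> gline s U2 f2" if "Z \<in> gline s B e2" for Z
    unfolding T_def U2_def f2_def using gline_trans[OF s nA Bd e2] that by blast
  have bL: "b \<in> gline s U2 f2" "c \<in> gline s U2 f2" "d \<in> gline s U2 f2"
    unfolding b_def c_def d_def using lin2 BCs by auto
  obtain \<mu> where mu: "m = complex_of_real \<mu> * b" using on_line_mult[OF s Ad assms(11)] unfolding m_def b_def T_def by blast
  obtain \<nu> where nu: "n = complex_of_real \<nu> * c" using on_line_mult[OF s Ad assms(13)] unfolding n_def c_def T_def by blast
  obtain \<pi> where pi: "p = complex_of_real \<pi> * d" using on_line_mult[OF s Ad assms(15)] unfolding p_def d_def T_def by blast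
  have MA: "M \<noteq> A" "N \<noteq> A" "P \<noteq> A" using assms(7,10,12,14) by auto
  have b0: "b \<noteq> 0" using Tinj[OF Bd Ad] T0 AB unfolding b_def by auto
  have c0: "c \<noteq> 0" using Tinj[OF Cd Ad] T0 AC unfolding c_def by auto
  have m0: "m \<noteq> 0" using Tinj[OF Md Ad] T0 MA unfolding m_def by auto
  have n0: "n \<noteq> 0" using Tinj[OF Nd Ad] T0 MA unfolding n_def by auto
  have p0: "p \<noteq> 0" using Tinj[OF Pd Ad] T0 MA unfolding p_def by auto
  have bdne: "b \<noteq> d" using Tinj[OF Bd Dd] assms(4) unfolding b_def d_def by auto
  have cdne: "c \<noteq> d" using Tinj[OF Cd Dd] assms(5) unfolding c_def d_def by auto
  have mu0: "\<mu> \<noteq> 0" using m0 mu by auto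
  have nu0: "\<nu> \<noteq> 0" using n0 nu by auto
  have pi0: "\<pi> \<noteq> 0" using p0 pi by auto
  have E1: "cmod ((d - b) * ((complex_of_real s)\<^sup>2 - cnj b * d)) * \<bar>Im (cnj c * d)\<bar>
       = cmod ((d - c) * ((complex_of_real s)\<^sup>2 - cnj c * d)) * \<bar>Im (cnj b * d)\<bar>"
    by (rule Lkey[OF s U2 f2 bL(1) bL(2) bL(3)])
  have E2: "cmod ((p - n) * ((complex_of_real s)\<^sup>2 - cnj n * p)) * \<bar>Im (cnj m * p)\<bar>
       = cmod ((p - m) * ((complex_of_real s)\<^sup>2 - cnj m * p)) * \<bar>Im (cnj n * p)\<bar>"
    by (rule Lkey[OF s U1 f1 mL(2) mL(1) mL(3)])
  have Hbd: "cmod ((d - b) * ((complex_of_real s)\<^sup>2 - cnj b * d)) > 0" by (rule Hpos[OF s bd(1) bd(3) bdne])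
  have Hcd: "cmod ((d - c) * ((complex_of_real s)\<^sup>2 - cnj c * d)) > 0" by (rule Hpos[OF s bd(2) bd(3) cdne])
  have Imm: "Im (cnj m * p) = \<mu> * \<pi> * Im (cnj b * d)" unfolding mu pi by (simp add: algebra_simps)
  have Imn: "Im (cnj n * p) = \<nu> * \<pi> * Im (cnj c * d)" unfolding nu pi by (simp add: algebra_simps)
  have I2: "Im (cnj c * d) \<noteq> 0"
  proof
    assume I0: "Im (cnj c * d) = 0"
    have "Im (cnj b * c) = 0"
    proof (cases "d = 0")
      case True
      have "cmod ((c - b) * ((complex_of_real s)\<^sup>2 - cnj b * c)) * \<bar>Im (cnj d * c)\<bar>
          = cmod ((c - d) * ((complex_of_real s)\<^sup>2 - cnj d * c)) * \<bar>Im (cnj b * c)\<bar>"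
        by (rule Lkey[OF s U2 f2 bL(1) bL(3) bL(2)])
      then have "cmod c * s^2 * \<bar>Im (cnj b * c)\<bar> = 0" using True by (simp add: norm_mult norm_power)
      then show ?thesis using c0 s by simp
    next
      case False
      have "Im (cnj b * d) = 0" using E1 I0 Hcd by simp
      then show ?thesis using real_trans I0 False by blast
    qed
    then have "C \<in> gyroline s A B"
      using backward[OF s Ad Bd Cd] b0 unfolding b_def c_def T_def by blast
    then show False using CnAB by simp
  qed
  have I1: "Im (cnj b * d) \<noteq> 0" using E1 I2 Hbd by auto
  have mpne: "m \<noteq> p"
  proof
    assume "m = p"
    then have "Im (cnj m * p) = \<mu> * \<mu> * Im (cnj b * b)" unfolding mu by simp
    then have "\<mu> * \<pi> * Im (cnj b * d) = 0" using Imm by simp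
    then show False using mu0 pi0 I1 by simp
  qed
  have Hmp: "cmod ((p - m) * ((complex_of_real s)\<^sup>2 - cnj m * p)) > 0" by (rule Hpos[OF s bd(4) bd(6) mpne])
  have gi: "gyrodist s X Y = gyrodist s (T X) (T Y)" if "cmod X < s" "cmod Y < s" for X Y
    unfolding T_def using gd_inv[OF s nA that] by simp
  have G: "gamma_len s (gyrodist s x y) = s^2 * cmod ((y - x) * ((complex_of_real s)\<^sup>2 - cnj x * y)) / ((s^2 - (cmod x)^2) * (s^2 - (cmod y)^2))"
    if "cmod x < s" "cmod y < s" for x y
    using gl_formula[OF s that] by (simp add: norm_mult)
  have kpos: "s^2 - (cmod x)^2 > 0" if "cmod x < s" for x :: complex
    using that s by (simp add: power_strict_mono)
  have H0: "cmod ((0 - x) * ((complex_of_real s)\<^sup>2 - cnj x * 0)) = s^2 * cmod x" for x :: complex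
    by (simp add: norm_mult norm_power)
  have nn: "cmod n = \<bar>\<nu>\<bar> * cmod c" unfolding nu by (simp add: norm_mult)
  have mm: "cmod m = \<bar>\<mu>\<bar> * cmod b" unfolding mu by (simp add: norm_mult)
  have E2': "cmod ((p - n) * ((complex_of_real s)\<^sup>2 - cnj n * p)) * (\<bar>\<mu>\<bar> * \<bar>\<pi>\<bar> * \<bar>Im (cnj b * d)\<bar>)
       = cmod ((p - m) * ((complex_of_real s)\<^sup>2 - cnj m * p)) * (\<bar>\<nu>\<bar> * \<bar>\<pi>\<bar> * \<bar>Im (cnj c * d)\<bar>)"
    using E2 unfolding Imm Imn by (simp add: abs_mult)
  have goal: "gamma_len s (gyrodist s b d) / gamma_len s (gyrodist s c d)
       * (gamma_len s (gyrodist s c 0) / gamma_len s (gyrodist s n 0))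
       * (gamma_len s (gyrodist s n p) / gamma_len s (gyrodist s m p))
       * (gamma_len s (gyrodist s m 0) / gamma_len s (gyrodist s b 0)) = 1"
    unfolding G[OF bd(1) bd(3)] G[OF bd(2) bd(3)] G[OF bd(2) z0] G[OF bd(5) z0] G[OF bd(5) bd(6)]
      G[OF bd(4) bd(6)] G[OF bd(4) z0] G[OF bd(1) z0]
    apply (rule final_arith[where Ja = "\<bar>Im (cnj b * d)\<bar>"])
    using s kpos[OF bd(1)] kpos[OF bd(2)] kpos[OF bd(3)] kpos[OF bd(4)] kpos[OF bd(5)] kpos[OF bd(6)] kpos[OF z0]
      Hbd Hcd Hmp c0 b0 mu0 nu0 pi0 I2 E1 E2' H0 nn mm
    by (auto simp: mult_ac)
  show ?thesis
    unfolding gi[OF Bd Dd] gi[OF Cd Dd] gi[OF Cd Ad] gi[OF Nd Ad] gi[OF Nd Pd] gi[OF Md Pd] gi[OF Md Ad] gi[OF Bd Ad] T0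
    using goal unfolding b_def c_def d_def m_def n_def p_def .
qed


end
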